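(* Let $m\geq n\geq 6$ and $S\subseteq V(K_m\Box K_n)$. If every row and every column of $K_m\Box K_n$ contains at least two elements of $S$ and every quadruple contains at least one element of $S$, then $S$ is a $\{2\}$-resolving set of $K_m\Box K_n$.
   Context: $K_m\Box K_n$ has vertices $av$ with $a\in V(K_m)$, $v\in V(K_n)$; distinct $av,bu$ are adjacent iff $a=b$ or $u=v$. A column is a set $\{au: u\in V(K_n)\}$ for fixed $a$; a row is a set $\{au: a\in V(K_m)\}$ for fixed $u$. A quadruple is a set $\{av,au,bv,bu\}$ with $a\neq b$, $u\neq v$. $d$ is the shortest-path distance, $d(s,X)=\min_{x\in X}d(s,x)$, $\mathcal{D}_S(X)=(d(s_1,X),\dots,d(s_k,X))$ for $S=\{s_1,\dots,s_k\}$. $S$ is a $\{2\}$-resolving set if $\mathcal{D}_S(X)\neq\mathcal{D}_S(Y)$ for all distinct nonempty vertex sets $X,Y$ with $|X|,|Y|\leq 2$. *)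

theory Defs
  imports Main
begin

definition rook_verts :: "nat \<Rightarrow> nat \<Rightarrow> (nat \<times> nat) set" where
  "rook_verts m n = {..<m} \<times> {..<n}"

definition rook_adj :: "nat \<times> nat \<Rightarrow> nat \<times> nat \<Rightarrow> bool" where
  "rook_adj x y \<longleftrightarrow> x \<noteq> y \<and> (fst x = fst y \<or> snd x = snd y)"

definition has_walk :: "('a \<Rightarrow> 'a \<Rightarrow> bool) \<Rightarrow> 'a set \<Rightarrow> 'a \<Rightarrow> 'a \<Rightarrow> nat \<Rightarrow> bool" where
  "has_walk E V x y k \<longleftrightarrow> (\<exists>p. length p = Suc k \<and> hd p = x \<and> last p = y \<and> set p \<subseteq> V
        \<and> (\<forall>i<k. E (p ! i) (p ! Suc i)))"

definition gdist :: "('a \<Rightarrow> 'a \<Rightarrow> bool) \<Rightarrow> 'a set \<Rightarrow> 'a \<Rightarrow> 'a \<Rightarrow> nat" where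
  "gdist E V x y = (LEAST k. has_walk E V x y k)"

definition gdist_set :: "('a \<Rightarrow> 'a \<Rightarrow> bool) \<Rightarrow> 'a set \<Rightarrow> 'a \<Rightarrow> 'a set \<Rightarrow> nat" where
  "gdist_set E V s X = Min ((\<lambda>x. gdist E V s x) ` X)"

definition two_resolving :: "('a \<Rightarrow> 'a \<Rightarrow> bool) \<Rightarrow> 'a set \<Rightarrow> 'a set \<Rightarrow> bool" where
  "two_resolving E V S \<longleftrightarrow> S \<subseteq> V \<and>
     (\<forall>X Y. X \<subseteq> V \<and> Y \<subseteq> V \<and> X \<noteq> {} \<and> Y \<noteq> {} \<and> card X \<le> 2 \<and> card Y \<le> 2 \<and> X \<noteq> Y
        \<longrightarrow> (\<exists>s\<in>S. gdist_set E V s X \<noteq> gdist_set E V s Y))"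

end

theory Submission imports Defs begin

lemma hw0: "has_walk E V x y 0 \<Longrightarrow> x = y"
  unfolding has_walk_def
proof (elim exE conjE)
  fix p :: "'a list" assume "length p = Suc 0" "hd p = x" "last p = y"
  then obtain a where "p = [a]" by (cases p) auto
  then show "x = y" using \<open>hd p = x\<close> \<open>last p = y\<close> by simp
qed

lemma hw1: "has_walk E V x y (Suc 0) \<Longrightarrow> E x y"
proof -
  assume "has_walk E V x y (Suc 0)"
  then obtain p where p: "length p = 2" "hd p = x" "last p = y" "E (p!0) (p!1)"
    unfolding has_walk_def by (auto simp: numeral_2_eq_2)
  obtain a b where "p = [a,b]" using p(1)
    by (cases p; cases "tl p") (auto simp: numeral_2_eq_2)
  then show ?thesis using p by simp
qed

lemma hw_refl: "x \<in> V \<Longrightarrow> has_walk E V x x 0"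
  unfolding has_walk_def by (rule exI[of _ "[x]"]) auto

lemma hw_one: "x \<in> V \<Longrightarrow> y \<in> V \<Longrightarrow> E x y \<Longrightarrow> has_walk E V x y (Suc 0)"
  unfolding has_walk_def by (rule exI[of _ "[x,y]"]) auto

lemma hw_two: "x \<in> V \<Longrightarrow> y \<in> V \<Longrightarrow> z \<in> V \<Longrightarrow> E x z \<Longrightarrow> E z y \<Longrightarrow> has_walk E V x y 2"
proof -
  assume a: "x \<in> V" "y \<in> V" "z \<in> V" "E x z" "E z y"
  have "\<forall>i<2. E ([x,z,y] ! i) ([x,z,y] ! Suc i)"
  proof (intro allI impI)
    fix i :: nat assume "i < 2"
    then have "i = 0 \<or> i = 1" by auto
    then show "E ([x,z,y] ! i) ([x,z,y] ! Suc i)" using a by auto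
  qed
  then show ?thesis unfolding has_walk_def using a by (intro exI[of _ "[x,z,y]"]) auto
qed

lemma gd:
  assumes "x \<in> rook_verts m n" "y \<in> rook_verts m n"
  shows "gdist rook_adj (rook_verts m n) x y =
     (if x = y then 0 else if fst x = fst y \<or> snd x = snd y then 1 else 2)"
proof -
  let ?V = "rook_verts m n"
  let ?P = "has_walk rook_adj ?V x y"
  show ?thesis
  proof (cases "x = y")
    case True
    then have "?P 0" using hw_refl[OF assms(1)] by simp
    then show ?thesis unfolding gdist_def using True by simp
  next
    case ne: False
    have n0: "\<not> ?P 0"
    proof
      assume "?P 0"
      then have "x = y" by (rule hw0)
      with ne show False by simp
    qed
    show ?thesis
    proof (cases "fst x = fst y \<or> snd x = snd y")
      case True
      have "?P (Suc 0)" by (rule hw_one[OF assms]) (use True ne in \<open>simp add: rook_adj_def\<close>)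
      have "(LEAST k. ?P k) = Suc 0"
      proof (rule Least_equality)
        show "?P (Suc 0)" by fact
        fix k assume "?P k"
        have "k \<noteq> 0"
        proof
          assume "k = 0"
          with \<open>?P k\<close> n0 show False by simp
        qed
        then show "Suc 0 \<le> k" by simp
      qed
      then show ?thesis using ne True unfolding gdist_def by simp
    next
      case False
      let ?z = "(fst x, snd y)"
      have z: "?z \<in> ?V" using assms unfolding rook_verts_def by auto
      have fx: "fst x \<noteq> fst y" "snd x \<noteq> snd y" using False by auto
      have "?P 2"
      proof (rule hw_two[OF assms z])
        show "rook_adj x ?z" unfolding rook_adj_def using fx by (simp add: prod_eq_iff)
        show "rook_adj ?z y" unfolding rook_adj_def using fx by (simp add: prod_eq_iff)
      qed
      have n1: "\<not> ?P (Suc 0)"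
      proof
        assume "?P (Suc 0)"
        then have "rook_adj x y" by (rule hw1)
        with fx show False unfolding rook_adj_def by simp
      qed
      have "(LEAST k. ?P k) = 2"
      proof (rule Least_equality)
        show "?P 2" by fact
        fix k assume "?P k"
        have "k \<noteq> 0"
        proof
          assume "k = 0"
          with \<open>?P k\<close> n0 show False by simp
        qed
        moreover have "k \<noteq> Suc 0"
        proof
          assume "k = Suc 0"
          with \<open>?P k\<close> n1 show False by simp
        qed
        ultimately show "2 \<le> k" by simp
      qed
      then show ?thesis using ne False unfolding gdist_def by simp
    qed
  qed
qed


lemma gds_le:
  assumes "s \<in> rook_verts m n" "X \<subseteq> rook_verts m n" "finite X" "X \<noteq> {}"
  shows "gdist_set rook_adj (rook_verts m n) s X \<le> 0 \<longleftrightarrow> s \<in> X"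
    and "gdist_set rook_adj (rook_verts m n) s X \<le> 1 \<longleftrightarrow> (\<exists>x\<in>X. fst s = fst x \<or> snd s = snd x)"
proof -
  have d: "\<And>x. x \<in> X \<Longrightarrow> gdist rook_adj (rook_verts m n) s x =
     (if s = x then 0 else if fst s = fst x \<or> snd s = snd x then 1 else 2)"
    using gd assms by blast
  have M: "gdist_set rook_adj (rook_verts m n) s X \<le> k \<longleftrightarrow> (\<exists>x\<in>X. gdist rook_adj (rook_verts m n) s x \<le> k)" for k
    unfolding gdist_set_def by (subst Min_le_iff) (use assms in auto)
  show "gdist_set rook_adj (rook_verts m n) s X \<le> 0 \<longleftrightarrow> s \<in> X"
  proof -
    have "\<forall>x\<in>X. (gdist rook_adj (rook_verts m n) s x \<le> 0) = (s = x)" using d by simp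
    then show ?thesis unfolding M by auto
  qed
  show "gdist_set rook_adj (rook_verts m n) s X \<le> 1 \<longleftrightarrow> (\<exists>x\<in>X. fst s = fst x \<or> snd s = snd x)"
  proof -
    have "\<forall>x\<in>X. (gdist rook_adj (rook_verts m n) s x \<le> 1) = (fst s = fst x \<or> snd s = snd x)" using d by auto
    then show ?thesis unfolding M by auto
  qed
qed

lemma card_le1: "A \<subseteq> {x} \<Longrightarrow> card A \<le> 1"
proof -
  assume "A \<subseteq> {x}"
  then have "card A \<le> card {x}" by (intro card_mono) auto
  then show ?thesis by simp
qed

lemma card2_sub:
  assumes "card A \<ge> 2" "A \<subseteq> {x, y}"
  shows "x \<noteq> y \<and> x \<in> A \<and> y \<in> A"
proof (intro conjI)
  show "x \<noteq> y"
  proof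
    assume "x = y"
    then have "A \<subseteq> {x}" using assms(2) by simp
    then show False using card_le1[of A x] assms(1) by simp
  qed
  show "x \<in> A"
  proof (rule ccontr)
    assume "x \<notin> A"
    then have "A \<subseteq> {y}" using assms(2) by blast
    then show False using card_le1[of A y] assms(1) by simp
  qed
  show "y \<in> A"
  proof (rule ccontr)
    assume "y \<notin> A"
    then have "A \<subseteq> {x}" using assms(2) by blast
    then show False using card_le1[of A x] assms(1) by simp
  qed
qed

lemma two_elems:
  assumes "2 \<le> card A"
  shows "\<exists>x y. x \<in> A \<and> y \<in> A \<and> x \<noteq> y"
proof -
  have "A \<noteq> {}" using assms by auto
  then obtain x where x: "x \<in> A" by blast
  have "A - {x} \<noteq> {}"
  proof
    assume "A - {x} = {}"
    then have "A \<subseteq> {x}" by blast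
    then show False using card_le1[of A x] assms by simp
  qed
  then obtain y where "y \<in> A - {x}" by blast
  then show ?thesis using x by blast
qed

lemma two_avoid:
  assumes "6 \<le> (m::nat)"
  shows "\<exists>c c'. c<m \<and> c'<m \<and> c\<noteq>c' \<and> c\<notin>{a1,a2,a3,a4} \<and> c'\<notin>{a1,a2,a3,a4}"
proof -
  let ?A = "{..<m} - {a1,a2,a3,a4}"
  have "card {a1,a2,a3,a4} \<le> 4" by (simp add: card_insert_le_m1)
  then have "card ?A \<ge> 2" using assms diff_card_le_card_Diff[of "{a1,a2,a3,a4}" "{..<m}"] by simp
  then obtain c c' where "c \<in> ?A" "c' \<in> ?A" "c \<noteq> c'"
    using two_elems by blast
  then show ?thesis by blast
qed


lemma row_incl:
  fixes p q r t :: "nat \<times> nat"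
  assumes m6: "6 \<le> m"
  and V: "p \<in> rook_verts m n" "q \<in> rook_verts m n" "r \<in> rook_verts m n" "t \<in> rook_verts m n"
  and SV: "S \<subseteq> rook_verts m n"
  and colc: "\<forall>a<m. card (S \<inter> {(a, u) | u. u < n}) \<ge> 2"
  and rowc: "\<forall>u<n. card (S \<inter> {(a, u) | a. a < m}) \<ge> 2"
  and quad: "\<forall>a<m. \<forall>b<m. \<forall>u<n. \<forall>v<n. a \<noteq> b \<and> u \<noteq> v \<longrightarrow>
           S \<inter> {(a, v), (a, u), (b, v), (b, u)} \<noteq> {}"
  and A: "\<forall>s\<in>S. (s \<in> {p,q}) = (s \<in> {r,t})"
  and B: "\<forall>s\<in>S. (fst s = fst p \<or> snd s = snd p \<or> fst s = fst q \<or> snd s = snd q) =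
                (fst s = fst r \<or> snd s = snd r \<or> fst s = fst t \<or> snd s = snd t)"
  shows "snd p \<in> {snd r, snd t}"
proof (rule ccontr)
  assume nw: "snd p \<notin> {snd r, snd t}"
  define a where "a = fst p"
  define w where "w = snd p"
  have p: "p = (a, w)" unfolding a_def w_def by simp
  have wn: "w < n" and am: "a < m" using V(1) unfolding p rook_verts_def by auto
  have pS: "p \<notin> S"
  proof
    assume "p \<in> S"
    then have "p \<in> {r,t}" using A[rule_format, OF \<open>p \<in> S\<close>] by simp
    then show False using nw by auto
  qed
  have rowsub: "S \<inter> {(c, w) | c. c < m} \<subseteq> {(fst r, w), (fst t, w)}"
  proof
    fix s assume s: "s \<in> S \<inter> {(c, w) | c. c < m}"
    then have sS: "s \<in> S" and ss: "fst s = fst p \<or> snd s = snd p" using p by auto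
    have "fst s = fst p \<or> snd s = snd p \<or> fst s = fst q \<or> snd s = snd q" using ss by blast
    then have "fst s = fst r \<or> snd s = snd r \<or> fst s = fst t \<or> snd s = snd t"
      using B[rule_format, OF sS] by blast
    then show "s \<in> {(fst r, w), (fst t, w)}" using s nw w_def by auto
  qed
  have R: "fst r \<noteq> fst t \<and> (fst r, w) \<in> S \<and> (fst t, w) \<in> S"
  proof -
    have "card (S \<inter> {(c, w) | c. c < m}) \<ge> 2" using rowc wn by blast
    from card2_sub[OF this rowsub] show ?thesis by simp
  qed
  then have ra: "fst r \<noteq> a" "fst t \<noteq> a" using pS p by auto
  have colsub: "S \<inter> {(a, z) | z. z < n} \<subseteq> {(a, snd r), (a, snd t)}"
  proof
    fix s assume s: "s \<in> S \<inter> {(a, z) | z. z < n}"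
    then have sS: "s \<in> S" and ss: "fst s = fst p \<or> snd s = snd p" using p by auto
    have "fst s = fst p \<or> snd s = snd p \<or> fst s = fst q \<or> snd s = snd q" using ss by blast
    then have "fst s = fst r \<or> snd s = snd r \<or> fst s = fst t \<or> snd s = snd t"
      using B[rule_format, OF sS] by blast
    then show "s \<in> {(a, snd r), (a, snd t)}" using s ra by auto
  qed
  have rt: "snd r \<noteq> snd t"
  proof -
    have "card (S \<inter> {(a, z) | z. z < n}) \<ge> 2" using colc am by blast
    from card2_sub[OF this colsub] show ?thesis by simp
  qed
  obtain c c' where cc: "c<m" "c'<m" "c\<noteq>c'" "c\<notin>{fst p, fst q, fst r, fst t}" "c'\<notin>{fst p, fst q, fst r, fst t}"
    using two_avoid[OF m6] by blast
  have key: "snd y = snd q" if y: "y \<in> {r, t}" for y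
  proof (rule ccontr)
    assume ny: "snd y \<noteq> snd q"
    have yw: "snd y \<noteq> w" using y nw w_def by auto
    have yn: "snd y < n" using y V unfolding rook_verts_def by auto
    have ns: "(c0, snd y) \<notin> S" if c0: "c0 \<notin> {fst p, fst q, fst r, fst t}" for c0
    proof
      assume s: "(c0, snd y) \<in> S"
      have "fst y = fst r \<and> snd y = snd r \<or> fst y = fst t \<and> snd y = snd t" using y by auto
      then have "c0 = fst r \<or> snd y = snd r \<or> c0 = fst t \<or> snd y = snd t" by auto
      then have "c0 = fst p \<or> snd y = snd p \<or> c0 = fst q \<or> snd y = snd q"
        using B[rule_format, OF s] by simp
      then show False using c0 ny yw w_def by auto
    qed
    have "(c, w) \<notin> S" "(c', w) \<notin> S" using rowsub cc by auto
    moreover have "(c, snd y) \<notin> S" "(c', snd y) \<notin> S" using ns cc by auto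
    moreover have "S \<inter> {(c, snd y), (c, w), (c', snd y), (c', w)} \<noteq> {}"
      by (rule quad[rule_format]) (use cc yw yn wn in auto)
    ultimately show False by auto
  qed
  show False using key[of r] key[of t] rt by auto
qed

lemma col_incl:
  fixes p q r t :: "nat \<times> nat"
  assumes n6: "6 \<le> n"
  and V: "p \<in> rook_verts m n" "q \<in> rook_verts m n" "r \<in> rook_verts m n" "t \<in> rook_verts m n"
  and SV: "S \<subseteq> rook_verts m n"
  and colc: "\<forall>a<m. card (S \<inter> {(a, u) | u. u < n}) \<ge> 2"
  and rowc: "\<forall>u<n. card (S \<inter> {(a, u) | a. a < m}) \<ge> 2"
  and quad: "\<forall>a<m. \<forall>b<m. \<forall>u<n. \<forall>v<n. a \<noteq> b \<and> u \<noteq> v \<longrightarrow>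
           S \<inter> {(a, v), (a, u), (b, v), (b, u)} \<noteq> {}"
  and A: "\<forall>s\<in>S. (s \<in> {p,q}) = (s \<in> {r,t})"
  and B: "\<forall>s\<in>S. (fst s = fst p \<or> snd s = snd p \<or> fst s = fst q \<or> snd s = snd q) =
                (fst s = fst r \<or> snd s = snd r \<or> fst s = fst t \<or> snd s = snd t)"
  shows "fst p \<in> {fst r, fst t}"
proof (rule ccontr)
  assume nw: "fst p \<notin> {fst r, fst t}"
  define a where "a = snd p"
  define w where "w = fst p"
  have p: "p = (w, a)" unfolding a_def w_def by simp
  have wn: "w < m" and am: "a < n" using V(1) unfolding p rook_verts_def by auto
  have pS: "p \<notin> S"
  proof
    assume "p \<in> S"
    then have "p \<in> {r,t}" using A[rule_format, OF \<open>p \<in> S\<close>] by simp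
    then show False using nw by auto
  qed
  have rowsub: "S \<inter> {(w, c) | c. c < n} \<subseteq> {(w, snd r), (w, snd t)}"
  proof
    fix s assume s: "s \<in> S \<inter> {(w, c) | c. c < n}"
    then have sS: "s \<in> S" and ss: "fst s = fst p \<or> snd s = snd p" using p by auto
    have "fst s = fst p \<or> snd s = snd p \<or> fst s = fst q \<or> snd s = snd q" using ss by blast
    then have "fst s = fst r \<or> snd s = snd r \<or> fst s = fst t \<or> snd s = snd t"
      using B[rule_format, OF sS] by blast
    then show "s \<in> {(w, snd r), (w, snd t)}" using s nw w_def by auto
  qed
  have R: "snd r \<noteq> snd t \<and> (w, snd r) \<in> S \<and> (w, snd t) \<in> S"
  proof -
    have "card (S \<inter> {(w, c) | c. c < n}) \<ge> 2" using colc wn by blast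
    from card2_sub[OF this rowsub] show ?thesis by simp
  qed
  then have ra: "snd r \<noteq> a" "snd t \<noteq> a" using pS p by auto
  have colsub: "S \<inter> {(z, a) | z. z < m} \<subseteq> {(fst r, a), (fst t, a)}"
  proof
    fix s assume s: "s \<in> S \<inter> {(z, a) | z. z < m}"
    then have sS: "s \<in> S" and ss: "fst s = fst p \<or> snd s = snd p" using p by auto
    have "fst s = fst p \<or> snd s = snd p \<or> fst s = fst q \<or> snd s = snd q" using ss by blast
    then have "fst s = fst r \<or> snd s = snd r \<or> fst s = fst t \<or> snd s = snd t"
      using B[rule_format, OF sS] by blast
    then show "s \<in> {(fst r, a), (fst t, a)}" using s ra by auto
  qed
  have rt: "fst r \<noteq> fst t"
  proof -
    have "card (S \<inter> {(z, a) | z. z < m}) \<ge> 2" using rowc am by blast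
    from card2_sub[OF this colsub] show ?thesis by simp
  qed
  obtain c c' where cc: "c<n" "c'<n" "c\<noteq>c'" "c\<notin>{snd p, snd q, snd r, snd t}" "c'\<notin>{snd p, snd q, snd r, snd t}"
    using two_avoid[OF n6] by blast
  have key: "fst y = fst q" if y: "y \<in> {r, t}" for y
  proof (rule ccontr)
    assume ny: "fst y \<noteq> fst q"
    have yw: "fst y \<noteq> w" using y nw w_def by auto
    have yn: "fst y < m" using y V unfolding rook_verts_def by auto
    have ns: "(fst y, c0) \<notin> S" if c0: "c0 \<notin> {snd p, snd q, snd r, snd t}" for c0
    proof
      assume s: "(fst y, c0) \<in> S"
      have "fst y = fst r \<and> snd y = snd r \<or> fst y = fst t \<and> snd y = snd t" using y by auto
      then have "fst y = fst r \<or> c0 = snd r \<or> fst y = fst t \<or> c0 = snd t" by auto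
      then have "fst y = fst p \<or> c0 = snd p \<or> fst y = fst q \<or> c0 = snd q"
        using B[rule_format, OF s] by simp
      then show False using c0 ny yw w_def by auto
    qed
    have "(w, c) \<notin> S" "(w, c') \<notin> S" using rowsub cc by auto
    moreover have "(fst y, c) \<notin> S" "(fst y, c') \<notin> S" using ns cc by auto
    moreover have "S \<inter> {(fst y, c'), (fst y, c), (w, c'), (w, c)} \<noteq> {}"
      by (rule quad[rule_format]) (use cc yw yn wn in auto)
    ultimately show False by auto
  qed
  show False using key[of r] key[of t] rt by auto
qed


lemma final:
  fixes p q r t :: "nat \<times> nat"
  assumes rows: "{snd p, snd q} = {snd r, snd t}" and cols: "{fst p, fst q} = {fst r, fst t}"
  and V: "p \<in> rook_verts m n" "q \<in> rook_verts m n"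
  and quad: "\<forall>a<m. \<forall>b<m. \<forall>u<n. \<forall>v<n. a \<noteq> b \<and> u \<noteq> v \<longrightarrow>
           S \<inter> {(a, v), (a, u), (b, v), (b, u)} \<noteq> {}"
  and A: "\<forall>s\<in>S. (s \<in> {p,q}) = (s \<in> {r,t})"
  shows "{p,q} = {r,t}"
proof -
  obtain a u where p: "p = (a,u)" by force
  obtain b v where q: "q = (b,v)" by force
  obtain c w where r: "r = (c,w)" by force
  obtain d z where t: "t = (d,z)" by force
  have rows': "{u,v} = {w,z}" and cols': "{a,b} = {c,d}" using rows cols p q r t by auto
  show ?thesis
  proof (cases "u = v \<or> a = b")
    case True
    then show ?thesis using rows' cols' unfolding p q r t by (auto simp: doubleton_eq_iff)
  next
    case False
    then have uv: "u \<noteq> v" "a \<noteq> b" by auto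
    have "(c = a \<and> d = b \<or> c = b \<and> d = a)" using cols' uv by (auto simp: doubleton_eq_iff)
    moreover have "(w = u \<and> z = v \<or> w = v \<and> z = u)" using rows' uv by (auto simp: doubleton_eq_iff)
    moreover have "S \<inter> {(a, v), (a, u), (b, v), (b, u)} \<noteq> {}"
      using quad uv V unfolding p q rook_verts_def by auto
    ultimately show ?thesis using A uv unfolding p q r t by auto
  qed
qed


lemma obtain2:
  assumes "X \<noteq> {}" "card X \<le> 2" "finite X"
  shows "\<exists>p q. X = {p,q}"
proof -
  obtain p where p: "p \<in> X" using assms by auto
  have c: "card (X - {p}) \<le> 1" using assms p by auto
  show ?thesis
  proof (cases "X - {p} = {}")
    case True then show ?thesis using p by auto
  next
    case False
    then have "card (X - {p}) = 1" using c assms(3) by (simp add: Suc_leI card_gt_0_iff le_antisym)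
    then obtain q where "X - {p} = {q}" using card_1_singletonE by blast
    then show ?thesis using p by auto
  qed
qed

theorem mainTheorem12:
  fixes m n :: nat and S :: "(nat \<times> nat) set"
  assumes "n \<ge> 6" and "m \<ge> n"
    and "S \<subseteq> rook_verts m n"
    and "\<forall>a<m. card (S \<inter> {(a, u) | u. u < n}) \<ge> 2"
    and "\<forall>u<n. card (S \<inter> {(a, u) | a. a < m}) \<ge> 2"
    and "\<forall>a<m. \<forall>b<m. \<forall>u<n. \<forall>v<n. a \<noteq> b \<and> u \<noteq> v \<longrightarrow>
           S \<inter> {(a, v), (a, u), (b, v), (b, u)} \<noteq> {}"
  shows "two_resolving rook_adj (rook_verts m n) S"
  unfolding two_resolving_def
proof (intro conjI allI impI)
  show "S \<subseteq> rook_verts m n" by fact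
  fix X Y
  assume H: "X \<subseteq> rook_verts m n \<and> Y \<subseteq> rook_verts m n \<and> X \<noteq> {} \<and> Y \<noteq> {} \<and> card X \<le> 2 \<and> card Y \<le> 2 \<and> X \<noteq> Y"
  have XV: "X \<subseteq> rook_verts m n" and YV: "Y \<subseteq> rook_verts m n" and Xne: "X \<noteq> {}" and Yne: "Y \<noteq> {}"
    and cX: "card X \<le> 2" and cY: "card Y \<le> 2" and XY: "X \<noteq> Y"
    using H by simp_all
  have finV: "finite (rook_verts m n)" unfolding rook_verts_def by simp
  have fX: "finite X" using finite_subset[OF XV finV] .
  have fY: "finite Y" using finite_subset[OF YV finV] .
  obtain p q where X: "X = {p,q}" using obtain2[OF Xne cX fX] by blast
  obtain r t where Y: "Y = {r,t}" using obtain2[OF Yne cY fY] by blast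
  have V: "p \<in> rook_verts m n" "q \<in> rook_verts m n" "r \<in> rook_verts m n" "t \<in> rook_verts m n"
    using XV YV X Y by auto
  have m6: "6 \<le> m" using assms by simp
  show "\<exists>s\<in>S. gdist_set rook_adj (rook_verts m n) s X \<noteq> gdist_set rook_adj (rook_verts m n) s Y"
  proof (rule ccontr)
    assume "\<not> ?thesis"
    then have eq: "\<forall>s\<in>S. gdist_set rook_adj (rook_verts m n) s X = gdist_set rook_adj (rook_verts m n) s Y"
      by blast
    have A: "\<forall>s\<in>S. (s \<in> {p,q}) = (s \<in> {r,t})"
    proof
      fix s assume s: "s \<in> S"
      then have sV: "s \<in> rook_verts m n" using assms(3) by blast
      have e: "gdist_set rook_adj (rook_verts m n) s X = gdist_set rook_adj (rook_verts m n) s Y"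
        using eq s by blast
      have "(s \<in> X) = (s \<in> Y)"
        using gds_le(1)[OF sV XV fX Xne] gds_le(1)[OF sV YV fY Yne] e by simp
      then show "(s \<in> {p,q}) = (s \<in> {r,t})" unfolding X Y .
    qed
    have B: "\<forall>s\<in>S. (fst s = fst p \<or> snd s = snd p \<or> fst s = fst q \<or> snd s = snd q) =
                (fst s = fst r \<or> snd s = snd r \<or> fst s = fst t \<or> snd s = snd t)"
    proof
      fix s assume s: "s \<in> S"
      then have sV: "s \<in> rook_verts m n" using assms(3) by blast
      have e: "gdist_set rook_adj (rook_verts m n) s X = gdist_set rook_adj (rook_verts m n) s Y"
        using eq s by blast
      have "(\<exists>x\<in>X. fst s = fst x \<or> snd s = snd x) = (\<exists>x\<in>Y. fst s = fst x \<or> snd s = snd x)"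
        using gds_le(2)[OF sV XV fX Xne] gds_le(2)[OF sV YV fY Yne] e by simp
      then show "(fst s = fst p \<or> snd s = snd p \<or> fst s = fst q \<or> snd s = snd q) =
                (fst s = fst r \<or> snd s = snd r \<or> fst s = fst t \<or> snd s = snd t)"
        unfolding X Y by auto
    qed
    have A2: "\<forall>s\<in>S. (s \<in> {q,p}) = (s \<in> {r,t})" "\<forall>s\<in>S. (s \<in> {r,t}) = (s \<in> {p,q})"
      "\<forall>s\<in>S. (s \<in> {t,r}) = (s \<in> {p,q})"
      using A by (simp_all add: insert_commute)
    have B2: "\<forall>s\<in>S. (fst s = fst q \<or> snd s = snd q \<or> fst s = fst p \<or> snd s = snd p) =
                (fst s = fst r \<or> snd s = snd r \<or> fst s = fst t \<or> snd s = snd t)"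
       "\<forall>s\<in>S. (fst s = fst r \<or> snd s = snd r \<or> fst s = fst t \<or> snd s = snd t) =
               (fst s = fst p \<or> snd s = snd p \<or> fst s = fst q \<or> snd s = snd q)"
       "\<forall>s\<in>S. (fst s = fst t \<or> snd s = snd t \<or> fst s = fst r \<or> snd s = snd r) =
               (fst s = fst p \<or> snd s = snd p \<or> fst s = fst q \<or> snd s = snd q)"
    proof -
      show "\<forall>s\<in>S. (fst s = fst q \<or> snd s = snd q \<or> fst s = fst p \<or> snd s = snd p) =
                (fst s = fst r \<or> snd s = snd r \<or> fst s = fst t \<or> snd s = snd t)"
      proof
        fix s assume "s \<in> S" from B[rule_format, OF this] show "(fst s = fst q \<or> snd s = snd q \<or> fst s = fst p \<or> snd s = snd p) =
                (fst s = fst r \<or> snd s = snd r \<or> fst s = fst t \<or> snd s = snd t)" by blast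
      qed
      show "\<forall>s\<in>S. (fst s = fst r \<or> snd s = snd r \<or> fst s = fst t \<or> snd s = snd t) =
               (fst s = fst p \<or> snd s = snd p \<or> fst s = fst q \<or> snd s = snd q)"
      proof
        fix s assume "s \<in> S" from B[rule_format, OF this] show "(fst s = fst r \<or> snd s = snd r \<or> fst s = fst t \<or> snd s = snd t) =
               (fst s = fst p \<or> snd s = snd p \<or> fst s = fst q \<or> snd s = snd q)" by blast
      qed
      show "\<forall>s\<in>S. (fst s = fst t \<or> snd s = snd t \<or> fst s = fst r \<or> snd s = snd r) =
               (fst s = fst p \<or> snd s = snd p \<or> fst s = fst q \<or> snd s = snd q)"
      proof
        fix s assume "s \<in> S" from B[rule_format, OF this] show "(fst s = fst t \<or> snd s = snd t \<or> fst s = fst r \<or> snd s = snd r) =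
               (fst s = fst p \<or> snd s = snd p \<or> fst s = fst q \<or> snd s = snd q)" by blast
      qed
    qed
    note R1 = row_incl[OF m6 V(1,2,3,4) assms(3,4,5,6) A B]
    note R2 = row_incl[OF m6 V(2,1,3,4) assms(3,4,5,6) A2(1) B2(1)]
    note R3 = row_incl[OF m6 V(3,4,1,2) assms(3,4,5,6) A2(2) B2(2)]
    note R4 = row_incl[OF m6 V(4,3,1,2) assms(3,4,5,6) A2(3) B2(3)]
    note C1 = col_incl[OF assms(1) V(1,2,3,4) assms(3,4,5,6) A B]
    note C2 = col_incl[OF assms(1) V(2,1,3,4) assms(3,4,5,6) A2(1) B2(1)]
    note C3 = col_incl[OF assms(1) V(3,4,1,2) assms(3,4,5,6) A2(2) B2(2)]
    note C4 = col_incl[OF assms(1) V(4,3,1,2) assms(3,4,5,6) A2(3) B2(3)]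
    have rows: "{snd p, snd q} = {snd r, snd t}" using R1 R2 R3 R4 by auto
    have cols: "{fst p, fst q} = {fst r, fst t}" using C1 C2 C3 C4 by auto
    have "{p,q} = {r,t}" using final[OF rows cols V(1,2) assms(6) A] .
    then show False using XY X Y by simp
  qed
qed

end
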